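(* Let $p$ be a prime and let $(\mathbb{K},|\cdot|_{\mathbb{K}})$ be a valued field with $\mathbb{Q}_p\subseteq\mathbb{K}$ such that the inclusion $\mathbb{Q}_p\hookrightarrow\mathbb{K}$ is continuous. Let $f:\mathbb{Q}_p\to\mathbb{K}$ be continuous and $n\ge 0$. Then $\Delta_h^{n+1}f(x)=0$ for all $x,h\in\mathbb{Q}_p$ if and only if there are constants $a_0,\dots,a_n\in\mathbb{K}$ with $f(x)=a_0+a_1x+\cdots+a_nx^n$ for all $x\in\mathbb{Q}_p$.
   Context: $\mathbb{Q}_p$ is the field of $p$-adic numbers with its usual $p$-adic absolute value topology. $\Delta_h^{m}f(x)=\sum_{k=0}^{m}\binom{m}{k}(-1)^{m-k}f(x+kh)$. *)

theory Defs
  imports Complex_Main "HOL-Computational_Algebra.Primes"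
begin

definition abs_value :: "('a::field \<Rightarrow> real) \<Rightarrow> bool" where
  "abs_value v \<longleftrightarrow> (\<forall>x. 0 \<le> v x) \<and> (\<forall>x. v x = 0 \<longleftrightarrow> x = 0)
     \<and> (\<forall>x y. v (x * y) = v x * v y) \<and> (\<forall>x y. v (x + y) \<le> v x + v y)"

definition padic_val_rat :: "nat \<Rightarrow> rat \<Rightarrow> int" where
  "padic_val_rat p r =
     int (multiplicity (int p) (fst (quotient_of r))) - int (multiplicity (int p) (snd (quotient_of r)))"

definition padic_abs_rat :: "nat \<Rightarrow> rat \<Rightarrow> real" where
  "padic_abs_rat p r = (if r = 0 then 0 else real p powr (- real_of_int (padic_val_rat p r)))"

definition abs_continuous :: "('a::field \<Rightarrow> real) \<Rightarrow> ('b::field \<Rightarrow> real) \<Rightarrow> ('a \<Rightarrow> 'b) \<Rightarrow> bool" where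
  "abs_continuous v w f \<longleftrightarrow>
     (\<forall>x. \<forall>e>0. \<exists>d>0. \<forall>y. v (y - x) < d \<longrightarrow> w (f y - f x) < e)"

text \<open>(Q, v) is a model of the p-adic numbers Q_p: the completion of the rationals
  with respect to the p-adic absolute value, i.e. a field of characteristic 0 with an
  absolute value extending the p-adic one on the rationals, complete, and in which the
  rationals are dense.\<close>
definition is_padic_field :: "nat \<Rightarrow> ('a::field_char_0 \<Rightarrow> real) \<Rightarrow> bool" where
  "is_padic_field p v \<longleftrightarrow> abs_value v
     \<and> (\<forall>r. v (of_rat r) = padic_abs_rat p r)
     \<and> (\<forall>X::nat \<Rightarrow> 'a. (\<forall>e>0. \<exists>N. \<forall>m\<ge>N. \<forall>n\<ge>N. v (X m - X n) < e)
            \<longrightarrow> (\<exists>L. \<forall>e>0. \<exists>N. \<forall>n\<ge>N. v (X n - L) < e))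
     \<and> (\<forall>x. \<forall>e>0. \<exists>r. v (x - of_rat r) < e)"

definition field_embedding :: "('a::field \<Rightarrow> 'b::field) \<Rightarrow> bool" where
  "field_embedding \<iota> \<longleftrightarrow> \<iota> 1 = 1 \<and> (\<forall>x y. \<iota> (x + y) = \<iota> x + \<iota> y) \<and> (\<forall>x y. \<iota> (x * y) = \<iota> x * \<iota> y)"

definition fdiff :: "'a::ring_1 \<Rightarrow> nat \<Rightarrow> ('a \<Rightarrow> 'b::ring_1) \<Rightarrow> 'a \<Rightarrow> 'b" where
  "fdiff h m f x = (\<Sum>k\<le>m. of_nat (m choose k) * (-1) ^ (m - k) * f (x + of_nat k * h))"

end

theory Submission
  imports Defs "HOL-Computational_Algebra.Polynomial"
begin


lemma pascal_rec:
  fixes g :: "nat \<Rightarrow> 'a::comm_ring_1"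
  shows "(\<Sum>k\<le>Suc m. of_nat (Suc m choose k) * (-1)^(Suc m - k) * g k)
       = (\<Sum>k\<le>m. of_nat (m choose k) * (-1)^(m - k) * (g (Suc k) - g k))"
proof -
  have A: "(\<Sum>k\<le>Suc m. of_nat (Suc m choose k) * (-1)^(Suc m - k) * g k)
     = (-1)^(Suc m) * g 0 + (\<Sum>k\<le>m. of_nat (m choose k) * (-1)^(m - k) * g (Suc k))
        + (\<Sum>k\<le>m. of_nat (m choose Suc k) * (-1)^(m - k) * g (Suc k))"
    by (subst sum.atMost_Suc_shift) (simp add: ring_distribs sum.distrib)
  have B: "(-1)^(Suc m) * g 0 + (\<Sum>k\<le>m. of_nat (m choose Suc k) * (-1)^(m - k) * g (Suc k))
     = (\<Sum>k\<le>Suc m. of_nat (m choose k) * (-1)^(Suc m - k) * g k)"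
    by (subst sum.atMost_Suc_shift) simp
  have C: "(\<Sum>k\<le>Suc m. of_nat (m choose k) * (-1)^(Suc m - k) * g k)
     = - (\<Sum>k\<le>m. of_nat (m choose k) * (-1)^(m - k) * g k)"
    by (auto simp add: sum_negf[symmetric] Suc_diff_le binomial_eq_0 intro!: sum.cong)
  show ?thesis using A B C by (simp add: algebra_simps sum_subtractf)
qed

lemma mono_kill:
  fixes u v :: "'a::comm_ring_1"
  shows "\<forall>i<m. \<forall>u. (\<Sum>k\<le>m. of_nat (m choose k) * (-1)^(m - k) * (u + of_nat k * v)^i) = 0"
proof (induction m)
  case 0 then show ?case by simp
next
  case (Suc m)
  show ?case
  proof (intro allI impI)
    fix i u assume i: "i < Suc m"
    have d: "(u + of_nat (Suc k) * v)^i - (u + of_nat k * v)^i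
        = (\<Sum>j<i. of_nat (i choose j) * v^(i-j) * (u + of_nat k * v)^j)" for k
    proof -
      have "(u + of_nat (Suc k) * v)^i = ((u + of_nat k * v) + v)^i" by (simp add: algebra_simps)
      also have "\<dots> = (\<Sum>j\<le>i. of_nat (i choose j) * (u + of_nat k * v)^j * v^(i-j))"
        by (rule binomial_ring)
      also have "\<dots> = (\<Sum>j<i. of_nat (i choose j) * v^(i-j) * (u + of_nat k * v)^j) + (u + of_nat k * v)^i"
        by (simp add: lessThan_Suc_atMost[symmetric] mult_ac)
      finally show ?thesis by simp
    qed
    have "(\<Sum>k\<le>Suc m. of_nat (Suc m choose k) * (-1)^(Suc m - k) * (u + of_nat k * v)^i)
       = (\<Sum>k\<le>m. of_nat (m choose k) * (-1)^(m - k) *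
            (\<Sum>j<i. of_nat (i choose j) * v^(i-j) * (u + of_nat k * v)^j))"
      by (simp only: pascal_rec d)
    also have "\<dots> = (\<Sum>j<i. of_nat (i choose j) * v^(i-j) *
          (\<Sum>k\<le>m. of_nat (m choose k) * (-1)^(m - k) * (u + of_nat k * v)^j))"
      by (simp add: sum_distrib_left sum_distrib_right mult_ac sum.swap[of _ "{..<i}"])
    also have "\<dots> = 0" using Suc.IH i by simp
    finally show "(\<Sum>k\<le>Suc m. of_nat (Suc m choose k) * (-1)^(Suc m - k) * (u + of_nat k * v)^i) = 0" .
  qed
qed

lemma poly_kill:
  fixes u v :: "'a::comm_ring_1"
  shows "(\<Sum>k\<le>Suc n. of_nat (Suc n choose k) * (-1)^(Suc n - k) *
            (\<Sum>i\<le>n. a i * (u + of_nat k * v)^i)) = 0"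
proof -
  have "(\<Sum>k\<le>Suc n. of_nat (Suc n choose k) * (-1)^(Suc n - k) *
            (\<Sum>i\<le>n. a i * (u + of_nat k * v)^i))
     = (\<Sum>i\<le>n. a i * (\<Sum>k\<le>Suc n. of_nat (Suc n choose k) * (-1)^(Suc n - k) * (u + of_nat k * v)^i))"
    by (simp only: sum_distrib_left sum_distrib_right mult_ac sum.swap[of _ "{..n}"])
  also have "\<dots> = 0" using mono_kill[of "Suc n" v] by simp
  finally show ?thesis .
qed



lemma rec_zero:
  fixes G :: "int \<Rightarrow> 'a::field"
  assumes rec: "\<And>x. (\<Sum>k\<le>Suc n. of_nat (Suc n choose k) * (-1)^(Suc n - k) * G (x + int k)) = 0"
    and z: "\<And>j. j \<le> n \<Longrightarrow> G (int j) = 0"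
  shows "G x = 0"
proof -
  have up: "G (int N) = 0" for N
  proof (induction N rule: less_induct)
    case (less N)
    show ?case
    proof (cases "N \<le> n")
      case True then show ?thesis by (rule z)
    next
      case False
      define y where "y = int (N - Suc n)"
      have "(\<Sum>k\<le>n. of_nat (Suc n choose k) * (-1)^(Suc n - k) * G (y + int k)) = 0"
      proof (intro sum.neutral ballI)
        fix k assume "k \<in> {..n}"
        have h: "y + int k = int (N - Suc n + k)" "N - Suc n + k < N" using False \<open>k \<in> {..n}\<close> unfolding y_def by simp_all
        have "G (y + int k) = 0" unfolding h(1) using less h(2) by blast
        then show "of_nat (Suc n choose k) * (-1)^(Suc n - k) * G (y + int k) = 0"
          by simp
      qed
      moreover have "y + int (Suc n) = int N" using False by (simp add: y_def)
      ultimately show ?thesis using rec[of y] by simp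
    qed
  qed
  have down: "G (- int N) = 0" for N
  proof (induction N rule: less_induct)
    case (less N)
    show ?case
    proof (cases "N = 0")
      case True then show ?thesis using up[of 0] by simp
    next
      case False
      have "(\<Sum>k\<le>n. of_nat (Suc n choose Suc k) * (-1)^(Suc n - Suc k) * G (- int N + int (Suc k))) = 0"
      proof (intro sum.neutral ballI)
        fix k assume "k \<in> {..n}"
        have "G (- int N + int (Suc k)) = 0"
        proof (cases "Suc k \<le> N")
          case True
          hence e: "- int N + int (Suc k) = - int (N - Suc k)" by simp
          show ?thesis unfolding e by (rule less.IH) (use False in simp)
        next
          case f: False
          hence e: "- int N + int (Suc k) = int (Suc k - N)" by simp
          show ?thesis unfolding e by (rule up)
        qed
        then show "of_nat (Suc n choose Suc k) * (-1)^(Suc n - Suc k) * G (- int N + int (Suc k)) = 0"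
          by simp
      qed
      moreover have "(\<Sum>k\<le>Suc n. of_nat (Suc n choose k) * (-1)^(Suc n - k) * G (- int N + int k)) =
         (-1)^(Suc n) * G (- int N) + (\<Sum>k\<le>n. of_nat (Suc n choose Suc k) * (-1)^(Suc n - Suc k) * G (- int N + int (Suc k)))"
        unfolding sum.atMost_Suc_shift by simp
      ultimately have "(-1)^(Suc n) * G (- int N) = 0" using rec[of "- int N"] by simp
      then show ?thesis by simp
    qed
  qed
  show ?thesis
  proof (cases "x \<ge> 0")
    case True then show ?thesis using up[of "nat x"] by simp
  next
    case False then show ?thesis using down[of "nat (- x)"] by simp
  qed
qed



lemma interp:
  fixes t y :: "nat \<Rightarrow> 'a::field"
  assumes "inj_on t {..n}"
  shows "\<exists>q. degree q \<le> n \<and> (\<forall>j\<le>n. poly q (t j) = y j)"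
  using assms
proof (induction n)
  case 0
  show ?case by (rule exI[of _ "[:y 0:]"]) simp
next
  case (Suc n)
  have "inj_on t {..n}" using Suc.prems by (rule inj_on_subset) auto
  then obtain q where q: "degree q \<le> n" "\<forall>j\<le>n. poly q (t j) = y j" using Suc.IH by blast
  define w where "w = (\<Prod>j\<le>n. [:- t j, 1:])"
  have dw: "degree w \<le> Suc n"
  proof -
    have "degree w \<le> sum (degree \<circ> (\<lambda>j. [:- t j, 1:])) {..n}"
      unfolding w_def by (rule degree_prod_sum_le) simp
    also have "\<dots> = Suc n" by simp
    finally show ?thesis .
  qed
  have pw: "poly w x = (\<Prod>j\<le>n. x - t j)" for x unfolding w_def by (simp add: poly_prod)
  have w0: "poly w (t j) = 0" if "j \<le> n" for j
    unfolding pw using that by (auto simp add: prod_zero_iff)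
  have wn: "poly w (t (Suc n)) \<noteq> 0"
  proof -
    have "t (Suc n) - t j \<noteq> 0" if "j \<le> n" for j
      using Suc.prems that by (auto dest: inj_onD)
    then show ?thesis unfolding pw by (simp add: prod_zero_iff)
  qed
  define c where "c = (y (Suc n) - poly q (t (Suc n))) / poly w (t (Suc n))"
  define q' where "q' = q + smult c w"
  have "degree q' \<le> Suc n"
    unfolding q'_def using q(1) dw degree_add_le degree_smult_le
    by (metis le_SucI order_trans)
  moreover have "\<forall>j\<le>Suc n. poly q' (t j) = y j"
  proof (intro allI impI)
    fix j assume "j \<le> Suc n"
    then consider "j \<le> n" | "j = Suc n" by linarith
    then show "poly q' (t j) = y j"
    proof cases
      case 1 then show ?thesis using q(2) w0 by (simp add: q'_def)
    next
      case 2 then show ?thesis using wn by (simp add: q'_def c_def)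
    qed
  qed
  ultimately show ?case by blast
qed



context fixes \<iota> :: "'a::field \<Rightarrow> 'b::field" assumes emb: "field_embedding \<iota>"
begin
lemma emb_add: "\<iota> (x + y) = \<iota> x + \<iota> y" and emb_mult: "\<iota> (x * y) = \<iota> x * \<iota> y" and emb_1: "\<iota> 1 = 1"
  using emb unfolding field_embedding_def by auto
lemma emb_0: "\<iota> 0 = 0"
  using emb_add[of 0 0] by (metis add.right_neutral add_left_cancel add_0)
lemma emb_uminus: "\<iota> (- x) = - \<iota> x"
  using emb_add[of x "-x"] emb_0 by (metis add.right_inverse neg_eq_iff_add_eq_0)
lemma emb_diff: "\<iota> (x - y) = \<iota> x - \<iota> y"
  using emb_add[of x "-y"] emb_uminus[of y] by simp
lemma emb_of_nat: "\<iota> (of_nat k) = of_nat k"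
  by (induction k) (simp_all add: emb_0 emb_add emb_1)
lemma emb_of_int: "\<iota> (of_int k) = of_int k"
  by (cases k rule: int_cases2) (simp_all add: emb_uminus emb_of_nat)
lemma emb_inj: "inj \<iota>"
proof (rule injI)
  fix x y assume "\<iota> x = \<iota> y"
  hence d: "\<iota> (x - y) = 0" by (simp add: emb_diff)
  show "x = y"
  proof (rule ccontr)
    assume "x \<noteq> y"
    hence "\<iota> ((x - y) * inverse (x - y)) = 1" by (simp add: emb_1)
    with d show False by (simp add: emb_mult)
  qed
qed
end

context fixes v :: "'a::field \<Rightarrow> real" assumes av: "abs_value v"
begin
lemma av_nonneg: "0 \<le> v x" and av_0: "v x = 0 \<longleftrightarrow> x = 0" and av_mult: "v (x * y) = v x * v y"
  and av_tri: "v (x + y) \<le> v x + v y"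
  using av unfolding abs_value_def by auto
lemma av_1: "v 1 = 1"
proof -
  have "v 1 = v 1 * v 1" using av_mult[of 1 1] by simp
  moreover have "v 1 \<noteq> 0" using av_0[of 1] by simp
  ultimately show ?thesis by (metis mult_cancel_right1)
qed
lemma av_m1: "v (-1) = 1"
proof -
  have "v (-1) * v (-1) = 1" using av_mult[of "-1" "-1"] av_1 by simp
  moreover have "v (-1) \<ge> 0" by (rule av_nonneg)
  moreover have "(v (-1) - 1) * (v (-1) + 1) = v (-1) * v (-1) - 1" by (simp add: algebra_simps)
  ultimately have "(v (-1) - 1) * (v (-1) + 1) = 0" by simp
  moreover have "v (-1) + 1 \<noteq> 0" using \<open>v (-1) \<ge> 0\<close> by linarith
  ultimately show ?thesis by simp
qed
lemma av_uminus: "v (- x) = v x"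
  using av_mult[of "-1" x] av_m1 by simp
lemma av_sym: "v (x - y) = v (y - x)"
  using av_uminus[of "x - y"] by simp
lemma av_tri2: "v a \<le> v b + v (a - b)"
  using av_tri[of b "a - b"] by simp
lemma av_tri3: "v (a - c) \<le> v (a - b) + v (b - c)"
  using av_tri[of "a - b" "b - c"] by simp
end

lemma ac_const: assumes "abs_value w" shows "abs_continuous v w (\<lambda>x. c)"
  unfolding abs_continuous_def
proof (intro allI impI)
  fix x and e :: real assume "e > 0"
  then show "\<exists>d>0. \<forall>y. v (y - x) < d \<longrightarrow> w (c - c) < e"
    using av_0[OF assms, of 0] by (intro exI[of _ 1]) auto
qed

lemma ac_add:
  assumes w: "abs_value w" and F: "abs_continuous v w F" and G: "abs_continuous v w G"
  shows "abs_continuous v w (\<lambda>x. F x + G x)"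
  unfolding abs_continuous_def
proof (intro allI impI)
  fix x and e :: real assume e: "e > 0"
  obtain d1 where d1: "d1 > 0" "\<forall>y. v (y - x) < d1 \<longrightarrow> w (F y - F x) < e/2"
    using F e unfolding abs_continuous_def by (meson half_gt_zero)
  obtain d2 where d2: "d2 > 0" "\<forall>y. v (y - x) < d2 \<longrightarrow> w (G y - G x) < e/2"
    using G e unfolding abs_continuous_def by (meson half_gt_zero)
  show "\<exists>d>0. \<forall>y. v (y - x) < d \<longrightarrow> w (F y + G y - (F x + G x)) < e"
  proof (intro exI[of _ "min d1 d2"] conjI allI impI)
    fix y assume "v (y - x) < min d1 d2"
    then have a: "w (F y - F x) < e/2" "w (G y - G x) < e/2" using d1 d2 by auto
    have "w (F y + G y - (F x + G x)) = w ((F y - F x) + (G y - G x))" by (simp add: algebra_simps)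
    also have "\<dots> \<le> w (F y - F x) + w (G y - G x)" by (rule av_tri[OF w])
    finally show "w (F y + G y - (F x + G x)) < e" using a by linarith
  qed (use d1 d2 in auto)
qed

lemma ac_mult:
  assumes w: "abs_value w" and F: "abs_continuous v w F" and G: "abs_continuous v w G"
  shows "abs_continuous v w (\<lambda>x. F x * G x)"
  unfolding abs_continuous_def
proof (intro allI impI)
  fix x and e :: real assume e: "e > 0"
  define A where "A = w (F x) + 1"
  define B where "B = w (G x) + 1"
  have A: "A > 0" and B: "B > 0" using av_nonneg[OF w] by (auto simp: A_def B_def add_nonneg_pos)
  have eA: "e / (2 * B) > 0" using e B by simp
  have eB: "e / (2 * A) > 0" using e A by simp
  obtain d1 where d1: "d1 > 0" "\<forall>y. v (y - x) < d1 \<longrightarrow> w (F y - F x) < min 1 (e / (2 * B))"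
    using F eA unfolding abs_continuous_def by (metis min_less_iff_conj zero_less_one)
  obtain d2 where d2: "d2 > 0" "\<forall>y. v (y - x) < d2 \<longrightarrow> w (G y - G x) < e / (2 * A)"
    using G eB unfolding abs_continuous_def by meson
  show "\<exists>d>0. \<forall>y. v (y - x) < d \<longrightarrow> w (F y * G y - F x * G x) < e"
  proof (intro exI[of _ "min d1 d2"] conjI allI impI)
    fix y assume "v (y - x) < min d1 d2"
    then have a: "w (F y - F x) < min 1 (e / (2 * B))" "w (G y - G x) < e / (2 * A)" using d1 d2 by auto
    have Fy: "w (F y) \<le> A" using av_tri2[OF w, of "F y" "F x"] a(1) by (simp add: A_def)
    have t1: "w (F y) * w (G y - G x) \<le> A * (e / (2 * A))"
      using Fy a(2) av_nonneg[OF w, of "F y"] av_nonneg[OF w, of "G y - G x"] A by (intro mult_mono) auto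
    have "w (F y - F x) * w (G x) \<le> w (F y - F x) * B"
      using av_nonneg[OF w] by (intro mult_left_mono) (auto simp: B_def)
    also have "\<dots> < (e / (2 * B)) * B"
      using a(1) B by (intro mult_strict_right_mono) auto
    finally have t2: "w (F y - F x) * w (G x) < (e / (2 * B)) * B" .
    have "w (F y * G y - F x * G x) = w (F y * (G y - G x) + (F y - F x) * G x)" by (simp add: algebra_simps)
    also have "\<dots> \<le> w (F y) * w (G y - G x) + w (F y - F x) * w (G x)"
      using av_tri[OF w, of "F y * (G y - G x)" "(F y - F x) * G x"] by (simp add: av_mult[OF w])
    also have "\<dots> < A * (e / (2 * A)) + (e / (2 * B)) * B" using t1 t2 by linarith
    also have "\<dots> = e" using A B by simp
    finally show "w (F y * G y - F x * G x) < e" .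
  qed (use d1 d2 in auto)
qed



lemma ac_poly:
  assumes w: "abs_value w" and I: "abs_continuous v w \<iota>"
  shows "abs_continuous v w (\<lambda>x. poly q (\<iota> x))"
proof (induction q)
  case 0 then show ?case using ac_const[OF w] by simp
next
  case (pCons a p)
  have "abs_continuous v w (\<lambda>x. a + \<iota> x * poly p (\<iota> x))"
    by (intro ac_add[OF w] ac_mult[OF w] ac_const[OF w] I pCons.IH)
  then show ?case by simp
qed

lemma ac_agree:
  assumes P: "is_padic_field p vQ" and w: "abs_value w"
    and F: "abs_continuous vQ w F" and G: "abs_continuous vQ w G"
    and eq: "\<And>r. F (of_rat r) = G (of_rat r)"
  shows "F x = G x"
proof (rule ccontr)
  assume ne: "F x \<noteq> G x"
  define e where "e = w (F x - G x)"
  have e: "e > 0" using ne av_0[OF w] av_nonneg[OF w] by (simp add: e_def order_less_le)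
  obtain d1 where d1: "d1 > 0" "\<forall>y. vQ (y - x) < d1 \<longrightarrow> w (F y - F x) < e/2"
    using F e unfolding abs_continuous_def by (meson half_gt_zero)
  obtain d2 where d2: "d2 > 0" "\<forall>y. vQ (y - x) < d2 \<longrightarrow> w (G y - G x) < e/2"
    using G e unfolding abs_continuous_def by (meson half_gt_zero)
  have avQ: "abs_value vQ" and dense: "\<forall>x. \<forall>e>0. \<exists>r. vQ (x - of_rat r) < e"
    using P unfolding is_padic_field_def by auto
  obtain r where r: "vQ (x - of_rat r) < min d1 d2" using dense d1 d2 by (meson min_less_iff_conj)
  hence "vQ (of_rat r - x) < min d1 d2" by (simp add: av_sym[OF avQ])
  hence a: "w (F (of_rat r) - F x) < e/2" "w (G (of_rat r) - G x) < e/2" using d1 d2 by auto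
  have "e = w (F x - G x)" by (simp add: e_def)
  also have "\<dots> \<le> w (F x - F (of_rat r)) + w (F (of_rat r) - G x)" by (rule av_tri3[OF w])
  also have "\<dots> = w (F (of_rat r) - F x) + w (G (of_rat r) - G x)"
    by (simp add: eq av_sym[OF w, of "F x"])
  finally show False using a by linarith
qed



lemma poly_le: fixes q :: "'a::comm_ring_1 poly" assumes "degree q \<le> n" shows "poly q z = (\<Sum>i\<le>n. coeff q i * z ^ i)"
  unfolding poly_altdef using assms by (intro sum.mono_neutral_left) (auto simp: coeff_eq_0)

theorem theorem6:
  fixes p :: nat and vQ :: "'q::field_char_0 \<Rightarrow> real" and vK :: "'k::field \<Rightarrow> real"
    and \<iota> :: "'q \<Rightarrow> 'k" and f :: "'q \<Rightarrow> 'k" and n :: nat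
  assumes "prime p"
    and "is_padic_field p vQ"
    and "abs_value vK"
    and "field_embedding \<iota>"
    and "abs_continuous vQ vK \<iota>"
    and "abs_continuous vQ vK f"
  shows "(\<forall>x h. fdiff h (n + 1) f x = 0) \<longleftrightarrow>
         (\<exists>a :: nat \<Rightarrow> 'k. \<forall>x. f x = (\<Sum>k\<le>n. a k * \<iota> x ^ k))"
proof
  note emb = assms(4)
  assume D: "\<forall>x h. fdiff h (n + 1) f x = 0"
  define hh :: "nat \<Rightarrow> 'q" where "hh b = inverse (of_nat b)" for b
  have ex: "\<forall>b. \<exists>q. b > 0 \<longrightarrow> degree q \<le> n \<and> (\<forall>j\<le>n. poly q (\<iota> (of_nat j * hh b)) = f (of_nat j * hh b))"
  proof
    fix b :: nat
    show "\<exists>q. b > 0 \<longrightarrow> degree q \<le> n \<and> (\<forall>j\<le>n. poly q (\<iota> (of_nat j * hh b)) = f (of_nat j * hh b))"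
    proof (cases "b > 0")
      case True
      have "inj_on (\<lambda>j. \<iota> (of_nat j * hh b)) {..n}"
      proof (rule inj_onI)
        fix i j assume "\<iota> (of_nat i * hh b) = \<iota> (of_nat j * hh b)"
        hence "of_nat i * hh b = (of_nat j * hh b :: 'q)" using emb_inj[OF emb] by (auto dest: injD)
        then show "i = j" using True by (simp add: hh_def)
      qed
      then show ?thesis using interp[of "\<lambda>j. \<iota> (of_nat j * hh b)" n "\<lambda>j. f (of_nat j * hh b)"] by blast
    qed simp
  qed
  then obtain Q where Q: "\<And>b. b > 0 \<Longrightarrow> degree (Q b) \<le> n \<and> (\<forall>j\<le>n. poly (Q b) (\<iota> (of_nat j * hh b)) = f (of_nat j * hh b))"
    by metis
  have c1: "f (of_int k * hh b) = poly (Q b) (\<iota> (of_int k * hh b))" if b: "b > 0" for b k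
  proof -
    define G where "G k = f (of_int k * hh b) - poly (Q b) (\<iota> (of_int k * hh b))" for k
    have "G k = 0"
    proof (rule rec_zero[of n G])
      fix x
      have e1: "of_int (x + int k) * hh b = of_int x * hh b + of_nat k * hh b" for k
        by (simp add: algebra_simps)
      have e2: "\<iota> (of_int (x + int k) * hh b) = \<iota> (of_int x * hh b) + of_nat k * \<iota> (hh b)" for k
        unfolding e1 by (simp add: emb_add[OF emb] emb_mult[OF emb] emb_of_nat[OF emb])
      have "(\<Sum>k\<le>Suc n. of_nat (Suc n choose k) * (-1)^(Suc n - k) * G (x + int k))
         = fdiff (hh b) (n+1) f (of_int x * hh b)
           - (\<Sum>k\<le>Suc n. of_nat (Suc n choose k) * (-1)^(Suc n - k) *
               (\<Sum>i\<le>n. coeff (Q b) i * (\<iota> (of_int x * hh b) + of_nat k * \<iota> (hh b))^i))"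
        unfolding G_def fdiff_def e1[symmetric] e2[symmetric] poly_le[OF Q[OF b, THEN conjunct1]]
        by (simp add: sum_subtractf algebra_simps)
      also have "\<dots> = 0"
      proof -
        have k0: "(\<Sum>k\<le>Suc n. of_nat (Suc n choose k) * (-1)^(Suc n - k) *
               (\<Sum>i\<le>n. coeff (Q b) i * (\<iota> (of_int x * hh b) + of_nat k * \<iota> (hh b))^i)) = 0"
          by (rule poly_kill)
        have f0: "fdiff (hh b) (n+1) f (of_int x * hh b) = 0" using D by blast
        show ?thesis by (simp only: k0 f0) simp
      qed
      finally show "(\<Sum>k\<le>Suc n. of_nat (Suc n choose k) * (-1)^(Suc n - k) * G (x + int k)) = 0" .
    next
      fix j assume "j \<le> n"
      then show "G (int j) = 0" using Q[OF b] by (simp add: G_def)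
    qed
    then show ?thesis by (simp add: G_def)
  qed
  have c2: "Q b = Q 1" if b: "b > 0" for b
  proof (rule poly_eqI_degree[where A = "(\<lambda>j. \<iota> (of_nat j)) ` {..n}"])
    fix z assume "z \<in> (\<lambda>j. \<iota> (of_nat j)) ` {..n}"
    then obtain j where z: "z = \<iota> (of_nat j)" by auto
    have e: "(of_int (int (j * b)) * hh b :: 'q) = of_nat j" using b by (simp add: hh_def)
    have "f (of_nat j) = poly (Q b) (\<iota> (of_nat j))" using c1[OF b, of "int (j * b)"] unfolding e .
    hence "poly (Q b) z = f (of_nat j)" using z by simp
    moreover have "poly (Q 1) z = f (of_nat j)" using c1[of 1 "int j"] z by (simp add: hh_def)
    ultimately show "poly (Q b) z = poly (Q 1) z" by simp
  next
    have "card ((\<lambda>j. \<iota> (of_nat j)) ` {..n}) = Suc n"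
    proof (subst card_image)
      show "inj_on (\<lambda>j. \<iota> (of_nat j :: 'q)) {..n}"
        using emb_inj[OF emb] by (auto intro!: inj_onI dest: injD)
    qed simp
    then show "degree (Q b) < card ((\<lambda>j. \<iota> (of_nat j)) ` {..n})"
      "degree (Q 1) < card ((\<lambda>j. \<iota> (of_nat j)) ` {..n})"
      using Q[OF b] Q[of 1] by auto
  qed
  have c3: "f (of_rat r) = poly (Q 1) (\<iota> (of_rat r))" for r
  proof -
    obtain a b where ab: "quotient_of r = (a, b)" by fastforce
    have b: "b > 0" using quotient_of_denom_pos[OF ab] .
    have "of_rat r = (of_int a / of_int b :: 'q)"
      using quotient_of_div[OF ab] by (simp add: of_rat_divide)
    also have "\<dots> = of_int a * hh (nat b)" using b by (simp add: hh_def divide_inverse)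
    finally have r: "of_rat r = of_int a * hh (nat b)" .
    show ?thesis unfolding r using c1[of "nat b" a] c2[of "nat b"] b by simp
  qed
  have "f x = poly (Q 1) (\<iota> x)" for x
    by (rule ac_agree[OF assms(2) assms(3) assms(6) ac_poly[OF assms(3) assms(5)] c3])
  then show "\<exists>a :: nat \<Rightarrow> 'k. \<forall>x. f x = (\<Sum>k\<le>n. a k * \<iota> x ^ k)"
    using poly_le[OF Q[of 1, THEN conjunct1]] by auto
next
  note emb = assms(4)
  assume "\<exists>a :: nat \<Rightarrow> 'k. \<forall>x. f x = (\<Sum>k\<le>n. a k * \<iota> x ^ k)"
  then obtain a where a: "\<And>x. f x = (\<Sum>k\<le>n. a k * \<iota> x ^ k)" by blast
  show "\<forall>x h. fdiff h (n + 1) f x = 0"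
  proof (intro allI)
    fix x h :: 'q
    have e: "\<iota> (x + of_nat k * h) = \<iota> x + of_nat k * \<iota> h" for k
      by (simp add: emb_add[OF emb] emb_mult[OF emb] emb_of_nat[OF emb])
    show "fdiff h (n + 1) f x = 0"
      unfolding fdiff_def a e Suc_eq_plus1[symmetric] by (rule poly_kill)
  qed
qed

end
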